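(* Let $s_{n,j}$ be the number of decorated partial Dyck paths consisting of $n$ steps and ending at level $j$, and let $S(z,u)=\sum_{n,j\ge0}s_{n,j}z^nu^j$. Put $W=\sqrt{1-6z^2+5z^4}$, with the branch satisfying $W=1$ at $z=0$, and $$r_1=\frac{1+z^2+W}{2z}.$$ Then $$S(z,u)=\frac{3-3z^2-W}{2zr_1(1-u/r_1)},$$ and for every $j\ge0$, $$[u^j]S(z,u)=\frac{3-3z^2-W}{2zr_1^{j+1}}.$$
   Context: A decorated (partial) Dyck path is a lattice path with the following properties. - It starts at $(0,0)$. - It uses up-steps $(1,1)$ and down-steps $(1,-1)$. - Each down-step is coloured either black or red. - It never goes below the $x$-axis. - An up-step is never immediately followed by a red down-step, and a red down-step is never immediately followed by an up-step. The path need not return to the $x$-axis; its level is the final $y$-coordinate. The empty path counts, with $n=0$ and $j=0$. These paths are equivalent to prefixes of skew Dyck paths, with a red down-step encoding a step $(-1,-1)$. *)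

theory Defs
  imports "HOL-Computational_Algebra.Formal_Laurent_Series"
begin

datatype step = Up | BlackDown | RedDown

fun delta :: "step \<Rightarrow> int" where
  "delta Up = 1"
| "delta BlackDown = -1"
| "delta RedDown = -1"

definition height :: "step list \<Rightarrow> int" where
  "height p = (\<Sum>s\<leftarrow>p. delta s)"

definition decorated :: "step list \<Rightarrow> bool" where
  "decorated p \<longleftrightarrow>
     (\<forall>k\<le>length p. height (take k p) \<ge> 0) \<and>
     (\<forall>i. Suc i < length p \<longrightarrow>
        \<not> (p ! i = Up \<and> p ! Suc i = RedDown) \<and>
        \<not> (p ! i = RedDown \<and> p ! Suc i = Up))"

definition s_count :: "nat \<Rightarrow> nat \<Rightarrow> nat" where
  "s_count n j = card {p. length p = n \<and> decorated p \<and> height p = int j}"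

text \<open>Bivariate generating function S(z,u), as a power series in u whose
  coefficients are (Laurent) series in z.\<close>
definition S_gf :: "real fls fps" where
  "S_gf = Abs_fps (\<lambda>j. fps_to_fls (Abs_fps (\<lambda>n. of_nat (s_count n j))))"

end

theory Submission
  imports Defs
begin


definition lastc :: "step list \<Rightarrow> step" where
  "lastc p = (if p = [] then BlackDown else last p)"

definition compat :: "step \<Rightarrow> step \<Rightarrow> bool" where
  "compat a b \<longleftrightarrow> \<not> (a = Up \<and> b = RedDown) \<and> \<not> (a = RedDown \<and> b = Up)"

lemma height_snoc [simp]: "height (p @ [c]) = height p + delta c"
  by (simp add: height_def)

lemma height_Nil [simp]: "height [] = 0"
  by (simp add: height_def)

lemma decorated_Nil [simp]: "decorated []"
  by (simp add: decorated_def)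

lemma decorated_height: "decorated p \<Longrightarrow> height p \<ge> 0"
  unfolding decorated_def by (metis order_refl take_all)

lemma decorated_snoc:
  "decorated (p @ [c]) \<longleftrightarrow> decorated p \<and> height p + delta c \<ge> 0 \<and> compat (lastc p) c"
proof
  assume d: "decorated (p @ [c])"
  have h1: "\<forall>k\<le>length p. height (take k p) \<ge> 0"
  proof (intro allI impI)
    fix k assume "k \<le> length p"
    then have "take k (p @ [c]) = take k p" by simp
    then show "height (take k p) \<ge> 0" using d \<open>k \<le> length p\<close> unfolding decorated_def
      by (metis le_SucI length_append_singleton)
  qed
  have h2: "\<forall>i. Suc i < length p \<longrightarrow>
        \<not> (p ! i = Up \<and> p ! Suc i = RedDown) \<and> \<not> (p ! i = RedDown \<and> p ! Suc i = Up)"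
  proof (intro allI impI)
    fix i assume i: "Suc i < length p"
    then have "(p @ [c]) ! i = p ! i" "(p @ [c]) ! Suc i = p ! Suc i" by (auto simp: nth_append)
    then show "\<not> (p ! i = Up \<and> p ! Suc i = RedDown) \<and> \<not> (p ! i = RedDown \<and> p ! Suc i = Up)"
      using d i unfolding decorated_def by (metis length_append_singleton less_SucI)
  qed
  have h3: "height p + delta c \<ge> 0" using decorated_height[OF d] by simp
  have h4: "compat (lastc p) c"
  proof (cases "p = []")
    case True then show ?thesis by (simp add: lastc_def compat_def)
  next
    case False
    then obtain i where i: "length p = Suc i" by (cases p) auto
    then have "(p @ [c]) ! i = last p" "(p @ [c]) ! Suc i = c"
      using False by (auto simp: nth_append last_conv_nth)
    then show ?thesis using d i False unfolding decorated_def lastc_def compat_def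
      by (metis length_append_singleton lessI)
  qed
  show "decorated p \<and> height p + delta c \<ge> 0 \<and> compat (lastc p) c"
    using h1 h2 h3 h4 by (simp add: decorated_def)
next
  assume a: "decorated p \<and> height p + delta c \<ge> 0 \<and> compat (lastc p) c"
  have h1: "\<forall>k\<le>length (p @ [c]). height (take k (p @ [c])) \<ge> 0"
  proof (intro allI impI)
    fix k assume k: "k \<le> length (p @ [c])"
    show "height (take k (p @ [c])) \<ge> 0"
    proof (cases "k \<le> length p")
      case True then show ?thesis using a unfolding decorated_def by simp
    next
      case False
      then have "take k (p @ [c]) = p @ [c]" using k by simp
      then show ?thesis using a by simp
    qed
  qed
  have h2: "\<forall>i. Suc i < length (p @ [c]) \<longrightarrow>
        \<not> ((p @ [c]) ! i = Up \<and> (p @ [c]) ! Suc i = RedDown) \<and>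
        \<not> ((p @ [c]) ! i = RedDown \<and> (p @ [c]) ! Suc i = Up)"
  proof (intro allI impI)
    fix i assume i: "Suc i < length (p @ [c])"
    show "\<not> ((p @ [c]) ! i = Up \<and> (p @ [c]) ! Suc i = RedDown) \<and>
        \<not> ((p @ [c]) ! i = RedDown \<and> (p @ [c]) ! Suc i = Up)"
    proof (cases "Suc i < length p")
      case True
      then have "(p @ [c]) ! i = p ! i" "(p @ [c]) ! Suc i = p ! Suc i" by (auto simp: nth_append)
      then show ?thesis using a True unfolding decorated_def by metis
    next
      case False
      then have li: "length p = Suc i" using i by simp
      then have "p \<noteq> []" by auto
      then have "(p @ [c]) ! i = last p" "(p @ [c]) ! Suc i = c"
        using li by (auto simp: nth_append last_conv_nth)
      then show ?thesis using a \<open>p \<noteq> []\<close> unfolding lastc_def compat_def by simp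
    qed
  qed
  show "decorated (p @ [c])" using h1 h2 by (simp add: decorated_def)
qed

definition cset :: "nat \<Rightarrow> int \<Rightarrow> step \<Rightarrow> step list set" where
  "cset n h c = {p. length p = n \<and> decorated p \<and> height p = h \<and> lastc p = c}"

definition cnt :: "nat \<Rightarrow> int \<Rightarrow> step \<Rightarrow> nat" where
  "cnt n h c = card (cset n h c)"

lemma step_UNIV: "(UNIV :: step set) = {Up, BlackDown, RedDown}"
  by (auto intro: step.exhaust)

lemma finite_step: "finite (UNIV :: step set)"
  by (simp add: step_UNIV)

lemma finite_len: "finite {p :: step list. length p = n}"
proof -
  have "finite {p :: step list. set p \<subseteq> UNIV \<and> length p = n}"
    by (rule finite_lists_length_eq) (simp add: step_UNIV)
  then show ?thesis by simp
qed

lemma finite_cset: "finite (cset n h c)"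
  by (rule finite_subset[OF _ finite_len[of n]]) (auto simp: cset_def)

lemma lastc_snoc [simp]: "lastc (p @ [c]) = c"
  by (simp add: lastc_def)

lemma cset_Suc:
  assumes "h \<ge> 0"
  shows "cset (Suc n) h c = (\<lambda>p. p @ [c]) ` (\<Union>c'\<in>{c'. compat c' c}. cset n (h - delta c) c')"
proof
  show "cset (Suc n) h c \<subseteq> (\<lambda>p. p @ [c]) ` (\<Union>c'\<in>{c'. compat c' c}. cset n (h - delta c) c')"
  proof
    fix q assume q: "q \<in> cset (Suc n) h c"
    then have "q \<noteq> []" by (auto simp: cset_def)
    then have qe: "q = butlast q @ [last q]" by simp
    have lq: "last q = c" using q \<open>q \<noteq> []\<close> by (simp add: cset_def lastc_def)
    have "decorated (butlast q @ [c])" using q qe lq by (simp add: cset_def)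
    then have "decorated (butlast q)" "compat (lastc (butlast q)) c"
      by (simp_all add: decorated_snoc)
    moreover have "height (butlast q) = h - delta c" using q qe lq
      by (metis (mono_tags, lifting) cset_def height_snoc mem_Collect_eq add_diff_cancel_right')
    moreover have "length (butlast q) = n" using q by (simp add: cset_def)
    ultimately have "butlast q \<in> (\<Union>c'\<in>{c'. compat c' c}. cset n (h - delta c) c')"
      by (auto simp: cset_def)
    then show "q \<in> (\<lambda>p. p @ [c]) ` (\<Union>c'\<in>{c'. compat c' c}. cset n (h - delta c) c')"
      using qe lq by (metis image_eqI)
  qed
next
  show "(\<lambda>p. p @ [c]) ` (\<Union>c'\<in>{c'. compat c' c}. cset n (h - delta c) c') \<subseteq> cset (Suc n) h c"
    using assms by (auto simp: cset_def decorated_snoc)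
qed

lemma cnt_Suc:
  assumes "h \<ge> 0"
  shows "cnt (Suc n) h c = (\<Sum>c'\<in>{c'. compat c' c}. cnt n (h - delta c) c')"
proof -
  have "cnt (Suc n) h c = card (\<Union>c'\<in>{c'. compat c' c}. cset n (h - delta c) c')"
    unfolding cnt_def cset_Suc[OF assms] by (rule card_image) (simp add: inj_on_def)
  also have "\<dots> = (\<Sum>c'\<in>{c'. compat c' c}. cnt n (h - delta c) c')"
    unfolding cnt_def
    apply (rule card_UN_disjoint)
    subgoal by (rule finite_subset[OF subset_UNIV finite_step])
    subgoal by (simp add: finite_cset)
    subgoal by (auto simp: cset_def)
    done
  finally show ?thesis .
qed

lemma cnt_neg: "h < 0 \<Longrightarrow> cnt n h c = 0"
proof -
  assume "h < 0"
  then have "cset n h c = {}" using decorated_height by (force simp: cset_def)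
  then show ?thesis by (simp add: cnt_def)
qed

lemma cnt_0: "cnt 0 h c = (if h = 0 \<and> c = BlackDown then 1 else 0)"
proof -
  have "cset 0 h c = (if h = 0 \<and> c = BlackDown then {[]} else {})"
    by (auto simp: cset_def lastc_def)
  then show ?thesis by (simp add: cnt_def)
qed

lemma compat_sets:
  "{c'. compat c' Up} = {Up, BlackDown}"
  "{c'. compat c' BlackDown} = {Up, BlackDown, RedDown}"
  "{c'. compat c' RedDown} = {BlackDown, RedDown}"
  by (auto simp: compat_def intro: step.exhaust)

lemma cnt_Suc_Up0: "cnt (Suc n) 0 Up = 0"
  using cnt_Suc[of 0 n Up] by (simp add: compat_sets cnt_neg)

lemma cnt_Suc_Up: "cnt (Suc n) (1 + int j) Up = cnt n (int j) Up + cnt n (int j) BlackDown"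
  using cnt_Suc[of "int j + 1" n Up] by (simp add: compat_sets add.commute)

lemma cnt_Suc_Black: "cnt (Suc n) (int j) BlackDown =
    cnt n (1 + int j) Up + cnt n (1 + int j) BlackDown + cnt n (1 + int j) RedDown"
  using cnt_Suc[of "int j" n BlackDown] by (simp add: compat_sets add.commute)

lemma cnt_Suc_Red: "cnt (Suc n) (int j) RedDown =
    cnt n (1 + int j) BlackDown + cnt n (1 + int j) RedDown"
  using cnt_Suc[of "int j" n RedDown] by (simp add: compat_sets add.commute)

lemma s_count_cnt: "s_count n j = cnt n (int j) Up + cnt n (int j) BlackDown + cnt n (int j) RedDown"
proof -
  have e: "{p. length p = n \<and> decorated p \<and> height p = int j} =
     cset n (int j) Up \<union> cset n (int j) BlackDown \<union> cset n (int j) RedDown"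
    by (auto simp: cset_def intro: step.exhaust)
  show ?thesis unfolding s_count_def e cnt_def
    by (subst card_Un_disjoint, simp_all add: finite_cset, fastforce simp: cset_def)+
qed



definition Uf :: "real fps \<Rightarrow> nat \<Rightarrow> real fps" where
  "Uf B j = (if j = 0 then 0 else (fps_X * B) ^ j)"
definition Kf :: "real fps \<Rightarrow> nat \<Rightarrow> real fps" where
  "Kf B j = (fps_X * B) ^ j * (B - (if j = 0 then 0 else 1))"
definition Rf :: "real fps \<Rightarrow> nat \<Rightarrow> real fps" where
  "Rf B j = (fps_X * B) ^ j * ((1 - fps_X ^ 2) * B - 1)"

lemma Uf_Suc: "Uf B (Suc j) = fps_X * (Uf B j + Kf B j)"
  by (simp add: Uf_def Kf_def algebra_simps)

lemma Kf_eq: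
  assumes key: "B = 1 - fps_X ^ 2 * B + fps_X ^ 2 * (2 - fps_X ^ 2) * B ^ 2"
  shows "Kf B j = (if j = 0 then 1 else 0) + fps_X * (Uf B (Suc j) + Kf B (Suc j) + Rf B (Suc j))"
proof -
  let ?G = "fps_X * B"
  have "fps_X * (Uf B (Suc j) + Kf B (Suc j) + Rf B (Suc j)) =
        ?G ^ j * (fps_X ^ 2 * B * ((2 - fps_X ^ 2) * B - 1))"
    by (simp add: Uf_def Kf_def Rf_def algebra_simps power2_eq_square)
  also have "fps_X ^ 2 * B * ((2 - fps_X ^ 2) * B - 1) = B - 1"
    using key by (simp add: algebra_simps power2_eq_square)
  finally have eq: "fps_X * (Uf B (Suc j) + Kf B (Suc j) + Rf B (Suc j)) = ?G ^ j * (B - 1)" .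
  show ?thesis unfolding eq by (simp add: Kf_def algebra_simps)
qed

lemma Rf_eq:
  assumes key: "B = 1 - fps_X ^ 2 * B + fps_X ^ 2 * (2 - fps_X ^ 2) * B ^ 2"
  shows "Rf B j = fps_X * (Kf B (Suc j) + Rf B (Suc j))"
proof -
  let ?G = "fps_X * B"
  have "fps_X * (Kf B (Suc j) + Rf B (Suc j)) =
        ?G ^ j * (fps_X ^ 2 * B * ((2 - fps_X ^ 2) * B - 2))"
    by (simp add: Kf_def Rf_def algebra_simps power2_eq_square)
  also have "fps_X ^ 2 * B * ((2 - fps_X ^ 2) * B - 2) = (1 - fps_X ^ 2) * B - 1"
    using key by (simp add: algebra_simps power2_eq_square)
  finally have eq: "fps_X * (Kf B (Suc j) + Rf B (Suc j)) = ?G ^ j * ((1 - fps_X ^ 2) * B - 1)" .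
  show ?thesis unfolding eq by (simp add: Rf_def)
qed

lemma main_count:
  assumes key: "B = 1 - fps_X ^ 2 * B + fps_X ^ 2 * (2 - fps_X ^ 2) * B ^ 2"
  shows "\<forall>j. Uf B j $ n = of_nat (cnt n (int j) Up) \<and> Kf B j $ n = of_nat (cnt n (int j) BlackDown)
          \<and> Rf B j $ n = of_nat (cnt n (int j) RedDown)"
proof (induction n)
  case 0
  show ?case
  proof
    fix j
    have "Uf B j $ 0 = 0" by (cases j) (simp_all add: Uf_def Uf_Suc)
    moreover have "Kf B j $ 0 = (if j = 0 then 1 else 0)" by (subst Kf_eq[OF key]) simp
    moreover have "Rf B j $ 0 = 0" by (subst Rf_eq[OF key]) simp
    ultimately show "Uf B j $ 0 = of_nat (cnt 0 (int j) Up) \<and> Kf B j $ 0 = of_nat (cnt 0 (int j) BlackDown)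
          \<and> Rf B j $ 0 = of_nat (cnt 0 (int j) RedDown)" by (simp add: cnt_0)
  qed
next
  case (Suc n)
  show ?case
  proof
    fix j
    have e: "int (Suc j) = int j + 1" by simp
    have "Uf B j $ Suc n = of_nat (cnt (Suc n) (int j) Up)"
    proof (cases j)
      case 0 then show ?thesis by (simp add: Uf_def cnt_Suc_Up0)
    next
      case (Suc j')
      have "cnt (Suc n) (1 + int j') Up = cnt n (int j') Up + cnt n (int j') BlackDown"
        using cnt_Suc_Up[of n j'] by simp
      then show ?thesis using Suc.IH Suc by (simp add: Uf_Suc)
    qed
    moreover have "Kf B j $ Suc n = of_nat (cnt (Suc n) (int j) BlackDown)"
      using Suc.IH by (subst Kf_eq[OF key]) (simp add: cnt_Suc_Black)
    moreover have "Rf B j $ Suc n = of_nat (cnt (Suc n) (int j) RedDown)"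
      using Suc.IH by (subst Rf_eq[OF key]) (simp add: cnt_Suc_Red)
    ultimately show "Uf B j $ Suc n = of_nat (cnt (Suc n) (int j) Up) \<and> Kf B j $ Suc n = of_nat (cnt (Suc n) (int j) BlackDown)
          \<and> Rf B j $ Suc n = of_nat (cnt (Suc n) (int j) RedDown)" by blast
  qed
qed

lemma s_gf_B:
  assumes key: "B = 1 - fps_X ^ 2 * B + fps_X ^ 2 * (2 - fps_X ^ 2) * B ^ 2"
  shows "(Abs_fps (\<lambda>n. of_nat (s_count n j)) :: real fps) = (fps_X * B) ^ j * ((2 - fps_X ^ 2) * B - 1)"
proof -
  have "(Abs_fps (\<lambda>n. of_nat (s_count n j)) :: real fps) = Uf B j + Kf B j + Rf B j"
    by (rule fps_ext) (use main_count[OF key] in \<open>simp add: s_count_cnt\<close>)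
  also have "\<dots> = (fps_X * B) ^ j * ((2 - fps_X ^ 2) * B - 1)"
    by (cases j) (simp_all add: Uf_def Kf_def Rf_def algebra_simps)
  finally show ?thesis .
qed



lemma W1_zero:
  fixes W :: "real fps"
  assumes W_sq: "W ^ 2 = 1 - 6 * fps_X ^ 2 + 5 * fps_X ^ 4" and W_0: "W $ 0 = 1"
  shows "W $ 1 = 0"
proof -
  have "(W ^ 2) $ 1 = 2 * W $ 1" using W_0 by (simp add: power2_eq_square fps_mult_nth)
  moreover have "((1 - 6 * fps_X ^ 2 + 5 * fps_X ^ 4) :: real fps) $ 1 = 0"
    by (simp add: fps_X_power_nth)
  ultimately show ?thesis using W_sq by simp
qed

lemma exists_B:
  fixes W :: "real fps"
  assumes W_sq: "W ^ 2 = 1 - 6 * fps_X ^ 2 + 5 * fps_X ^ 4" and W_0: "W $ 0 = 1"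
  shows "\<exists>B. W = 1 + fps_X ^ 2 - 2 * fps_X ^ 2 * (2 - fps_X ^ 2) * B \<and>
             B = 1 - fps_X ^ 2 * B + fps_X ^ 2 * (2 - fps_X ^ 2) * B ^ 2"
proof -
  define P where "P = 1 + fps_X ^ 2 - W"
  define Q where "Q = fps_shift 2 P"
  have W1: "W $ 1 = 0" by (rule W1_zero[OF W_sq W_0])
  have PQ: "P = Q * fps_X ^ 2"
  proof (rule fps_ext)
    fix n
    show "P $ n = (Q * fps_X ^ 2) $ n"
    proof (cases "n < 2")
      case True
      then have "n = 0 \<or> n = 1" by auto
      then show ?thesis using W_0 W1
        by (auto simp: P_def Q_def fps_X_power_mult_right_nth fps_X_power_nth)
    next
      case False
      then have "Suc (Suc (n - 2)) = n" by simp
      then show ?thesis using False by (simp add: Q_def fps_X_power_mult_right_nth)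
    qed
  qed
  define D :: "real fps" where "D = 4 - 2 * fps_X ^ 2"
  have D0: "D $ 0 \<noteq> 0" by (simp add: D_def)
  define B where "B = Q * inverse D"
  have BD: "B * D = Q" unfolding B_def using inverse_mult_eq_1[OF D0] by (simp add: mult.assoc)
  define c :: "real fps" where "c = fps_X ^ 2 * (2 - fps_X ^ 2)"
  have Weq: "W = 1 + fps_X ^ 2 - 2 * c * B"
  proof -
    have "W = 1 + fps_X ^ 2 - P" by (simp add: P_def)
    also have "P = B * D * fps_X ^ 2" using PQ BD by simp
    also have "B * D * fps_X ^ 2 = 2 * c * B" by (simp add: D_def c_def algebra_simps)
    finally show ?thesis .
  qed
  have id: "4 * c * (1 - (1 + fps_X ^ 2) * B + c * B ^ 2) =
            4 * c + (1 + fps_X ^ 2 - 2 * c * B) ^ 2 - (1 + fps_X ^ 2) ^ 2"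
    by (simp add: algebra_simps power2_eq_square)
  have id2: "4 * c + (1 - 6 * fps_X ^ 2 + 5 * fps_X ^ 4) - (1 + fps_X ^ 2) ^ 2 = (0 :: real fps)"
    by (simp add: c_def algebra_simps power2_eq_square power4_eq_xxxx)
  have z: "4 * c * (1 - (1 + fps_X ^ 2) * B + c * B ^ 2) = 0"
    using id id2 W_sq Weq by simp
  have c0: "c \<noteq> 0"
  proof -
    have h: "(2 - fps_X ^ 2 :: real fps) $ 0 = 2" by simp
    have "(2 - fps_X ^ 2 :: real fps) \<noteq> 0"
      using h by (metis fps_zero_nth zero_neq_numeral)
    then show ?thesis by (simp add: c_def)
  qed
  have f4: "(4 :: real fps) \<noteq> 0"
  proof -
    have h: "(4 :: real fps) $ 0 = 4" by simp
    then show ?thesis by (metis fps_zero_nth zero_neq_numeral)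
  qed
  have "1 - (1 + fps_X ^ 2) * B + c * B ^ 2 = 0" using z c0 f4 by simp
  then have key: "B = 1 - fps_X ^ 2 * B + fps_X ^ 2 * (2 - fps_X ^ 2) * B ^ 2"
    by (simp add: c_def algebra_simps)
  show ?thesis using Weq key by (auto simp: c_def mult.assoc)
qed

theorem theorem2:
  fixes W :: "real fps"
  assumes W_sq: "W ^ 2 = 1 - 6 * fps_X ^ 2 + 5 * fps_X ^ 4"
    and W_0: "fps_nth W 0 = 1"
  defines "Wl \<equiv> fps_to_fls W"
  defines "r1 \<equiv> (1 + fls_X ^ 2 + Wl) / (2 * fls_X)"
  shows "S_gf = fps_const (3 - 3 * fls_X ^ 2 - Wl)
                / (fps_const (2 * fls_X * r1) * (1 - fps_X / fps_const r1))
         \<and> (\<forall>j. fps_to_fls (Abs_fps (\<lambda>n. of_nat (s_count n j)))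
              = (3 - 3 * fls_X ^ 2 - Wl) / (2 * fls_X * r1 ^ (j + 1)))"
proof -
  obtain B where Weq: "W = 1 + fps_X ^ 2 - 2 * fps_X ^ 2 * (2 - fps_X ^ 2) * B"
    and key: "B = 1 - fps_X ^ 2 * B + fps_X ^ 2 * (2 - fps_X ^ 2) * B ^ 2"
    using exists_B[OF W_sq W_0] by blast
  define b where "b = fps_to_fls B"
  define x :: "real fls" where "x = fls_X"
  have x0: "x \<noteq> 0" by (simp add: x_def)
  have wl: "Wl = 1 + x ^ 2 - 2 * x ^ 2 * (2 - x ^ 2) * b"
    unfolding Wl_def b_def x_def by (subst Weq) (simp add: fps_to_fls_power fls_times_fps_to_fls)
  have keyl: "b = 1 - x ^ 2 * b + x ^ 2 * (2 - x ^ 2) * b ^ 2"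
    unfolding b_def x_def by (subst key) (simp add: fps_to_fls_power fls_times_fps_to_fls)
  have r1e: "r1 = (1 + x ^ 2 + Wl) / (2 * x)" by (simp add: r1_def x_def)
  have r1xb: "r1 * (x * b) = 1"
  proof -
    have "r1 * (x * b) = (1 + x ^ 2 + Wl) * b / 2" using x0 by (simp add: r1e field_simps)
    also have "\<dots> = b + x ^ 2 * b - x ^ 2 * (2 - x ^ 2) * b ^ 2"
      by (simp add: wl field_simps power2_eq_square)
    also have "\<dots> = 1" using keyl by (simp add: algebra_simps)
    finally show ?thesis .
  qed
  define q where "q = x * b"
  have q0: "q \<noteq> 0" using r1xb q_def by auto
  have "q * r1 = 1" using r1xb q_def by (simp add: mult.commute)
  then have r1q: "r1 = inverse q" by (metis inverse_unique)
  define A where "A = 3 - 3 * x ^ 2 - Wl"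
  have Ab: "A * b / 2 = (2 - x ^ 2) * b - 1"
  proof -
    have "A * b / 2 = b - 2 * x ^ 2 * b + x ^ 2 * (2 - x ^ 2) * b ^ 2"
      by (simp add: A_def wl field_simps power2_eq_square)
    also have "\<dots> = (2 - x ^ 2) * b - 1" using keyl by (simp add: algebra_simps)
    finally show ?thesis .
  qed
  have coef: "fps_to_fls (Abs_fps (\<lambda>n. of_nat (s_count n j)))
              = A / (2 * x * r1 ^ (j + 1))" for j
  proof -
    have "fps_to_fls (Abs_fps (\<lambda>n. of_nat (s_count n j))) = q ^ j * ((2 - x ^ 2) * b - 1)"
      unfolding s_gf_B[OF key] q_def b_def x_def
      by (simp add: fps_to_fls_power fls_times_fps_to_fls)
    also have "\<dots> = q ^ j * (A * b / 2)" by (simp add: Ab)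
    also have "\<dots> = A / (2 * x * r1 ^ (j + 1))"
      using x0 q0 by (simp add: r1q power_inverse field_simps q_def)
    finally show ?thesis .
  qed
  have part2: "\<forall>j. fps_to_fls (Abs_fps (\<lambda>n. of_nat (s_count n j)))
              = (3 - 3 * fls_X ^ 2 - Wl) / (2 * fls_X * r1 ^ (j + 1))"
    using coef by (simp add: A_def x_def)
  define K where "K = A / (2 * x * r1)"
  have Snth: "S_gf $ j = K * q ^ j" for j
    unfolding S_gf_def using coef[of j] x0 q0
    by (simp add: K_def r1q power_inverse field_simps)
  define Den where "Den = fps_const (2 * x * r1) * (1 - fps_X * fps_const q)"
  have den: "fps_const (2 * fls_X * r1) * (1 - fps_X / fps_const r1) = Den"
  proof -
    have "fps_X / fps_const r1 = fps_X * inverse (fps_const r1)"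
      by (rule fps_divide_unit) (simp add: r1q q0)
    also have "inverse (fps_const r1) = fps_const q"
      by (simp add: fps_const_inverse r1q) 
    finally show ?thesis by (simp add: Den_def x_def)
  qed
  have Den0: "Den \<noteq> 0"
  proof -
    have "Den $ 0 = 2 * x * r1" by (simp add: Den_def)
    also have "\<dots> \<noteq> 0" using x0 q0 by (simp add: r1q)
    finally show ?thesis by auto
  qed
  have prod: "S_gf * Den = fps_const A"
  proof (rule fps_ext)
    fix n
    have "S_gf * Den = fps_const (2 * x * r1) * (S_gf - fps_X * (fps_const q * S_gf))"
      by (simp add: Den_def algebra_simps)
    then have "(S_gf * Den) $ n = 2 * x * r1 * (S_gf $ n - (if n = 0 then 0 else q * S_gf $ (n - 1)))"
      by simp
    also have "\<dots> = fps_const A $ n"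
    proof (cases n)
      case 0 then show ?thesis using x0 q0 by (simp add: Snth K_def r1q field_simps)
    next
      case (Suc m) then show ?thesis by (simp add: Snth algebra_simps)
    qed
    finally show "(S_gf * Den) $ n = fps_const A $ n" .
  qed
  have part1: "S_gf = fps_const A / Den"
    using prod Den0 by (metis nonzero_mult_div_cancel_right)
  show ?thesis using part1 part2 den by (simp add: A_def x_def)
qed

end
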